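(* Let $q$ be a prime power and let $X \subset \mathbb{P}^2$ be the Hermitian curve over $\mathbb{F}_{q^2}$, the projective closure of the affine curve $x^{q+1} = y^q + y$. Let $P_0$ be its unique point at infinity, let $\rho$ be an integer with $0 \le \rho \le q^2-q-2$ and $G = \rho P_0$, let $P_1,\dots,P_n$, $n = q^3$, be the affine $\mathbb{F}_{q^2}$-rational points of $X$, and $D = P_1+\cdots+P_n$. Let $d$ be the minimum distance of the Hermitian code $C(D,G)^*$, and assume that $L(G) = H^0(\mathbb{P}^2, \mathcal{O}_{\mathbb{P}^2}(d-2))$, i.e. $L(G)$ equals the space of restrictions to $X$ of polynomials in $x,y$ of degree at most $d-2$. Let $a$ be an integer with $0 \le a \le d-3$ and let $\{P_{i_1},\ldots,P_{i_{d+a}}\}$ be the points $P_i$ with nonzero coordinate in a codeword of $C(D,G)^*$ of weight $d+a$. Then at least $d-1$ of the points $P_{i_1},\ldots,P_{i_{d+a}}$ are collinear.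
   Context: $L(G)$ is the Riemann–Roch space of rational functions $f$ on $X$ with $f=0$ or $\mathrm{div}(f)+G \ge 0$. $C(D,G) = \{(f(P_1),\dots,f(P_n)) : f \in L(G)\}$ and the Hermitian code $C(D,G)^*$ is its dual: the set of $c \in \mathbb{F}_{q^2}^n$ with $\sum_i c_i f(P_i) = 0$ for all $f \in L(G)$. Weight = number of nonzero coordinates; minimum distance = minimum weight of a nonzero codeword. *)

theory Defs
  imports "HOL-Computational_Algebra.Primes"
begin

text \<open>Affine F-rational points of the Hermitian curve x^(q+1) = y^q + y
  (F is the ambient finite field, of order q^2 in the theorem).\<close>
definition herm_pts :: "nat \<Rightarrow> ('a::field \<times> 'a) set" where
  "herm_pts q = {(x, y). x ^ (q + 1) = y ^ q + y}"

text \<open>Vectors in F^n, n = number of affine points, indexed by the points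
  themselves; a vector is a function vanishing off the point set.\<close>
definition herm_word :: "nat \<Rightarrow> ('a::field \<times> 'a \<Rightarrow> 'a) \<Rightarrow> bool" where
  "herm_word q v \<longleftrightarrow> (\<forall>P. P \<notin> herm_pts q \<longrightarrow> v P = 0)"

text \<open>The code C(D, rho P0): evaluation vectors of L(rho P0). L(rho P0) has
  the standard basis x^i y^j with 0 <= i <= q and q i + (q+1) j <= rho
  (x, y have pole orders q, q+1 at P0).\<close>
definition herm_LG_code :: "nat \<Rightarrow> nat \<Rightarrow> ('a::field \<times> 'a \<Rightarrow> 'a) set" where
  "herm_LG_code q \<rho> = {v. herm_word q v \<and>
     (\<exists>c :: nat \<Rightarrow> nat \<Rightarrow> 'a. \<forall>x y. (x, y) \<in> herm_pts q \<longrightarrow>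
        v (x, y) = (\<Sum>i\<le>q. \<Sum>j\<le>\<rho>.
           if q * i + (q + 1) * j \<le> \<rho> then c i j * x ^ i * y ^ j else 0))}"

text \<open>Evaluation vectors of restrictions to X of polynomials in x, y of total
  degree at most m (= H^0(P^2, O(m)) restricted to the affine points).\<close>
definition herm_poly_code :: "nat \<Rightarrow> nat \<Rightarrow> ('a::field \<times> 'a \<Rightarrow> 'a) set" where
  "herm_poly_code q m = {v. herm_word q v \<and>
     (\<exists>c :: nat \<Rightarrow> nat \<Rightarrow> 'a. \<forall>x y. (x, y) \<in> herm_pts q \<longrightarrow>
        v (x, y) = (\<Sum>i\<le>m. \<Sum>j\<le>m - i. c i j * x ^ i * y ^ j))}"

definition herm_dual_code :: "nat \<Rightarrow> nat \<Rightarrow> ('a::field \<times> 'a \<Rightarrow> 'a) set" where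
  "herm_dual_code q \<rho> = {c. herm_word q c \<and>
     (\<forall>v \<in> herm_LG_code q \<rho>. (\<Sum>P \<in> herm_pts q. c P * v P) = 0)}"

definition herm_weight :: "nat \<Rightarrow> ('a::field \<times> 'a \<Rightarrow> 'a) \<Rightarrow> nat" where
  "herm_weight q c = card {P \<in> herm_pts q. c P \<noteq> 0}"

definition herm_min_dist :: "nat \<Rightarrow> nat \<Rightarrow> 'a::field itself \<Rightarrow> nat" where
  "herm_min_dist q \<rho> _ = Min {herm_weight q c | c :: 'a \<times> 'a \<Rightarrow> 'a.
       c \<in> herm_dual_code q \<rho> \<and> c \<noteq> (\<lambda>_. 0)}"

definition collinear_pts :: "('a::field \<times> 'a) set \<Rightarrow> bool" where
  "collinear_pts S \<longleftrightarrow> (\<exists>a b e. (a, b) \<noteq> (0, 0) \<and>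
     (\<forall>(x, y) \<in> S. a * x + b * y + e = 0))"

end

theory Submission
  imports Defs
begin

definition pf :: "nat \<Rightarrow> ('a::field \<times> 'a \<Rightarrow> 'a) \<Rightarrow> bool" where
  "pf m f \<longleftrightarrow> (\<exists>c :: nat \<Rightarrow> nat \<Rightarrow> 'a. \<forall>x y.
      f (x, y) = (\<Sum>i\<le>m. \<Sum>j\<le>m - i. c i j * x ^ i * y ^ j))"

lemma pf_const: "pf 0 (\<lambda>_. k)"
  unfolding pf_def by (rule exI[of _ "\<lambda>_ _. k"]) simp

lemma pf_add: assumes "pf m f" "pf m g" shows "pf m (\<lambda>p. f p + g p)"
proof -
  obtain c where c: "\<And>x y. f (x, y) = (\<Sum>i\<le>m. \<Sum>j\<le>m - i. c i j * x ^ i * y ^ j)"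
    using assms(1) unfolding pf_def by blast
  obtain c' where c': "\<And>x y. g (x, y) = (\<Sum>i\<le>m. \<Sum>j\<le>m - i. c' i j * x ^ i * y ^ j)"
    using assms(2) unfolding pf_def by blast
  show ?thesis unfolding pf_def
    by (rule exI[of _ "\<lambda>i j. c i j + c' i j"])
       (simp add: c c' distrib_right sum.distrib)
qed

lemma pf_smult: assumes "pf m f" shows "pf m (\<lambda>p. k * f p)"
proof -
  obtain c where c: "\<And>x y. f (x, y) = (\<Sum>i\<le>m. \<Sum>j\<le>m - i. c i j * x ^ i * y ^ j)"
    using assms(1) unfolding pf_def by blast
  show ?thesis unfolding pf_def
    by (rule exI[of _ "\<lambda>i j. k * c i j"])
       (simp add: c sum_distrib_left mult.assoc)
qed

lemma pf_lift: assumes "pf m f" shows "pf (Suc m) f"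
proof -
  obtain c where c: "\<And>x y. f (x, y) = (\<Sum>i\<le>m. \<Sum>j\<le>m - i. c i j * x ^ i * y ^ j)"
    using assms(1) unfolding pf_def by blast
  define c' where "c' i j = (if i + j \<le> m then c i j else 0)" for i j
  have key: "(\<Sum>i\<le>Suc m. \<Sum>j\<le>Suc m - i. c' i j * x ^ i * y ^ j)
      = (\<Sum>i\<le>m. \<Sum>j\<le>m - i. c i j * x ^ i * y ^ j)" for x y
  proof -
    have key: "(\<Sum>i\<le>Suc m. \<Sum>j\<le>Suc m - i. c' i j * x ^ i * y ^ j)
        = (\<Sum>i\<le>m. \<Sum>j\<le>Suc m - i. c' i j * x ^ i * y ^ j)"
      by (simp add: c'_def)
    also have "\<dots> = (\<Sum>i\<le>m. \<Sum>j\<le>m - i. c i j * x ^ i * y ^ j)"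
    proof (rule sum.cong[OF refl])
      fix i assume "i \<in> {..m}"
      then have e: "Suc m - i = Suc (m - i)" by auto
      show "(\<Sum>j\<le>Suc m - i. c' i j * x ^ i * y ^ j) = (\<Sum>j\<le>m - i. c i j * x ^ i * y ^ j)"
        unfolding e using \<open>i \<in> {..m}\<close> by (auto simp: c'_def intro!: sum.cong)
    qed
    finally show ?thesis .
  qed
  show ?thesis unfolding pf_def by (intro exI[of _ c'] allI) (simp only: key c)
qed

lemma pf_x: assumes "pf m f" shows "pf (Suc m) (\<lambda>p. fst p * f p)"
proof -
  obtain c where c: "\<And>x y. f (x, y) = (\<Sum>i\<le>m. \<Sum>j\<le>m - i. c i j * x ^ i * y ^ j)"
    using assms(1) unfolding pf_def by blast
  define c' where "c' i j = (if i = 0 then 0 else c (i - 1) j)" for i j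
  have key: "(\<Sum>i\<le>Suc m. \<Sum>j\<le>Suc m - i. c' i j * x ^ i * y ^ j)
      = x * (\<Sum>i\<le>m. \<Sum>j\<le>m - i. c i j * x ^ i * y ^ j)" for x y
  proof -
    have key: "(\<Sum>i\<le>Suc m. \<Sum>j\<le>Suc m - i. c' i j * x ^ i * y ^ j)
       = (\<Sum>j\<le>Suc m - 0. c' 0 j * x ^ 0 * y ^ j) + (\<Sum>i\<le>m. \<Sum>j\<le>Suc m - Suc i. c' (Suc i) j * x ^ Suc i * y ^ j)"
      by (rule sum.atMost_Suc_shift)
    also have "\<dots> = (\<Sum>i\<le>m. \<Sum>j\<le>m - i. x * (c i j * x ^ i * y ^ j))"
      by (simp add: c'_def mult_ac)
    also have "\<dots> = x * (\<Sum>i\<le>m. \<Sum>j\<le>m - i. c i j * x ^ i * y ^ j)"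
      by (simp add: sum_distrib_left)
    finally show ?thesis .
  qed
  show ?thesis unfolding pf_def by (intro exI[of _ c'] allI) (simp only: key c fst_conv snd_conv)
qed

lemma pf_y: assumes "pf m f" shows "pf (Suc m) (\<lambda>p. snd p * f p)"
proof -
  obtain c where c: "\<And>x y. f (x, y) = (\<Sum>i\<le>m. \<Sum>j\<le>m - i. c i j * x ^ i * y ^ j)"
    using assms(1) unfolding pf_def by blast
  define c' where "c' i j = (if j = 0 then 0 else c i (j - 1))" for i j
  have key: "(\<Sum>i\<le>Suc m. \<Sum>j\<le>Suc m - i. c' i j * x ^ i * y ^ j)
      = y * (\<Sum>i\<le>m. \<Sum>j\<le>m - i. c i j * x ^ i * y ^ j)" for x y
  proof -
    have key: "(\<Sum>i\<le>Suc m. \<Sum>j\<le>Suc m - i. c' i j * x ^ i * y ^ j)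
        = (\<Sum>i\<le>m. \<Sum>j\<le>Suc m - i. c' i j * x ^ i * y ^ j)"
      by (simp add: c'_def)
    also have "\<dots> = (\<Sum>i\<le>m. y * (\<Sum>j\<le>m - i. c i j * x ^ i * y ^ j))"
    proof (rule sum.cong[OF refl])
      fix i assume "i \<in> {..m}"
      then have e: "Suc m - i = Suc (m - i)" by auto
      show "(\<Sum>j\<le>Suc m - i. c' i j * x ^ i * y ^ j) = y * (\<Sum>j\<le>m - i. c i j * x ^ i * y ^ j)"
      proof -
        have "(\<Sum>j\<le>Suc (m - i). c' i j * x ^ i * y ^ j)
          = c' i 0 * x ^ i * y ^ 0 + (\<Sum>j\<le>m - i. c' i (Suc j) * x ^ i * y ^ Suc j)"
          by (rule sum.atMost_Suc_shift)
        also have "\<dots> = (\<Sum>j\<le>m - i. y * (c i j * x ^ i * y ^ j))"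
          by (simp add: c'_def mult_ac)
        also have "\<dots> = y * (\<Sum>j\<le>m - i. c i j * x ^ i * y ^ j)"
          by (simp add: sum_distrib_left)
        finally show ?thesis unfolding e .
      qed
    qed
    finally show ?thesis by (simp add: sum_distrib_left)
  qed
  show ?thesis unfolding pf_def by (intro exI[of _ c'] allI) (simp only: key c fst_conv snd_conv)
qed

lemma pf_lin: assumes "pf m f"
  shows "pf (Suc m) (\<lambda>p. (\<alpha> * fst p + \<beta> * snd p + \<gamma>) * f p)"
proof -
  have "pf (Suc m) (\<lambda>p. \<alpha> * (fst p * f p) + \<beta> * (snd p * f p) + \<gamma> * f p)"
    by (rule pf_add[OF pf_add[OF pf_smult[OF pf_x[OF assms]] pf_smult[OF pf_y[OF assms]]] pf_smult[OF pf_lift[OF assms]]])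
  then show ?thesis by (simp add: algebra_simps)
qed


definition coll :: "'a::field \<times> 'a \<Rightarrow> 'a \<times> 'a \<Rightarrow> 'a \<times> 'a \<Rightarrow> bool" where
  "coll P Q R \<longleftrightarrow> (fst Q - fst P) * (snd R - snd P) = (snd Q - snd P) * (fst R - fst P)"

lemma coll_refl: "coll P Q Q"
  by (simp add: coll_def mult.commute)

lemma coll_sym: "coll P Q R \<Longrightarrow> coll P R Q"
  by (simp add: coll_def mult.commute)

lemma coll_trans: assumes "Y \<noteq> P" "coll P Y Q" "coll P Y R" shows "coll P Q R"
proof -
  obtain p1 p2 where P: "P = (p1, p2)" by (cases P)
  obtain y1 y2 where Y: "Y = (y1, y2)" by (cases Y)
  obtain q1 q2 where Q: "Q = (q1, q2)" by (cases Q)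
  obtain r1 r2 where R: "R = (r1, r2)" by (cases R)
  define u1 where "u1 = y1 - p1"
  define u2 where "u2 = y2 - p2"
  define v1 where "v1 = q1 - p1"
  define v2 where "v2 = q2 - p2"
  define w1 where "w1 = r1 - p1"
  define w2 where "w2 = r2 - p2"
  have h1: "u1 * v2 = u2 * v1" using assms(2) by (simp add: coll_def P Y Q u1_def u2_def v1_def v2_def)
  have h2: "u1 * w2 = u2 * w1" using assms(3) by (simp add: coll_def P Y R u1_def u2_def w1_def w2_def)
  have nz: "u1 \<noteq> 0 \<or> u2 \<noteq> 0" using assms(1) by (auto simp: P Y u1_def u2_def)
  have "v1 * w2 = v2 * w1"
  proof (cases "u1 = 0")
    case False
    have "u1 * (v1 * w2) = v1 * (u1 * w2)" by (simp add: mult_ac)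
    also have "\<dots> = v1 * (u2 * w1)" using h2 by simp
    also have "\<dots> = w1 * (u2 * v1)" by (simp add: mult_ac)
    also have "\<dots> = w1 * (u1 * v2)" using h1 by simp
    also have "\<dots> = u1 * (v2 * w1)" by (simp add: mult_ac)
    finally show ?thesis using False by simp
  next
    case True
    then have u2: "u2 \<noteq> 0" using nz by simp
    have "u2 * (v1 * w2) = w2 * (u2 * v1)" by (simp add: mult_ac)
    also have "\<dots> = w2 * (u1 * v2)" using h1 by simp
    also have "\<dots> = v2 * (u1 * w2)" by (simp add: mult_ac)
    also have "\<dots> = v2 * (u2 * w1)" using h2 by simp
    also have "\<dots> = u2 * (v2 * w1)" by (simp add: mult_ac)
    finally show ?thesis using u2 by simp
  qed
  then show ?thesis by (simp add: coll_def P Q R v1_def v2_def w1_def w2_def)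
qed

definition cls :: "'a::field \<times> 'a \<Rightarrow> ('a \<times> 'a) set \<Rightarrow> 'a \<times> 'a \<Rightarrow> ('a \<times> 'a) set" where
  "cls P T Q = {R \<in> T. coll P Q R}"


lemma line1: assumes "Q \<noteq> P"
  shows "\<exists>\<alpha> \<beta> \<gamma>. \<alpha> * fst Q + \<beta> * snd Q + \<gamma> = (0::'a::field) \<and> \<alpha> * fst P + \<beta> * snd P + \<gamma> \<noteq> 0"
proof (cases "fst Q = fst P")
  case True
  then have "snd Q \<noteq> snd P" using assms by (simp add: prod_eq_iff)
  then show ?thesis by (intro exI[of _ 0] exI[of _ 1] exI[of _ "- snd Q"]) simp
next
  case False
  then show ?thesis by (intro exI[of _ 1] exI[of _ 0] exI[of _ "- fst Q"]) simp
qed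

lemma line2: assumes "\<not> coll P Q R"
  shows "\<exists>\<alpha> \<beta> \<gamma>. \<alpha> * fst Q + \<beta> * snd Q + \<gamma> = (0::'a::field) \<and>
     \<alpha> * fst R + \<beta> * snd R + \<gamma> = 0 \<and> \<alpha> * fst P + \<beta> * snd P + \<gamma> \<noteq> 0"
proof -
  define \<alpha> where "\<alpha> = snd R - snd Q"
  define \<beta> where "\<beta> = - (fst R - fst Q)"
  define \<gamma> where "\<gamma> = - (\<alpha> * fst Q + \<beta> * snd Q)"
  have 1: "\<alpha> * fst Q + \<beta> * snd Q + \<gamma> = 0" by (simp add: \<gamma>_def)
  have 2: "\<alpha> * fst R + \<beta> * snd R + \<gamma> = 0"
    by (simp add: \<alpha>_def \<beta>_def \<gamma>_def algebra_simps)
  have e: "\<alpha> * fst P + \<beta> * snd P + \<gamma> =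
      (snd Q - snd P) * (fst R - fst P) - (fst Q - fst P) * (snd R - snd P)"
    by (simp add: \<alpha>_def \<beta>_def \<gamma>_def algebra_simps)
  have "\<alpha> * fst P + \<beta> * snd P + \<gamma> \<noteq> 0"
    using assms unfolding e coll_def by simp
  with 1 2 show ?thesis by blast
qed

lemma cover:
  fixes P :: "'a::field \<times> 'a"
  shows "finite T \<Longrightarrow> P \<notin> T \<Longrightarrow> card T \<le> 2 * m \<Longrightarrow> (\<forall>Q\<in>T. card (cls P T Q) \<le> m) \<Longrightarrow>
     \<exists>f. pf m f \<and> (\<forall>Q\<in>T. f Q = 0) \<and> f P \<noteq> 0"
proof (induction m arbitrary: T)
  case 0
  then have "T = {}" by simp
  then show ?case using pf_const[of "1::'a"] by auto
next
  case (Suc m)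
  note fin = Suc.prems(1) and PT = Suc.prems(2) and cT = Suc.prems(3) and cb = Suc.prems(4)
  have step: "\<exists>f. pf (Suc m) f \<and> (\<forall>Q\<in>T. f Q = 0) \<and> f P \<noteq> 0"
    if T': "T' \<subseteq> T" "card T' \<le> 2 * m" "\<forall>Q\<in>T'. card (cls P T' Q) \<le> m"
    and g: "\<forall>Q\<in>T - T'. \<alpha> * fst Q + \<beta> * snd Q + \<gamma> = 0" "\<alpha> * fst P + \<beta> * snd P + \<gamma> \<noteq> 0"
    for T' \<alpha> \<beta> \<gamma>
  proof -
    have "finite T'" using T'(1) fin finite_subset by blast
    moreover have "P \<notin> T'" using T'(1) PT by blast
    ultimately obtain f where f: "pf m f" "\<forall>Q\<in>T'. f Q = 0" "f P \<noteq> 0"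
      using Suc.IH[of T'] T' by blast
    show ?thesis
      apply (rule exI[of _ "\<lambda>p. (\<alpha> * fst p + \<beta> * snd p + \<gamma>) * f p"])
      using pf_lin[OF f(1), of \<alpha> \<beta> \<gamma>] f g by auto
  qed
  have clsT: "cls P T X \<subseteq> T" for X by (auto simp: cls_def)
  have clsfin: "finite (cls P T X)" for X using clsT fin finite_subset by blast
  show ?case
  proof (cases "T = {}")
    case True
    show ?thesis
      by (rule step[of "{}" 0 0 1]) (auto simp: True)
  next
    case False
    define full where "full X \<longleftrightarrow> card (cls P T X) = Suc m" for X
    obtain Q where Q: "Q \<in> T" "(\<exists>X\<in>T. full X) \<longrightarrow> full Q"
      using False by blast
    have QP: "Q \<noteq> P" using Q PT by blast
    show ?thesis
    proof (cases "\<forall>R\<in>T. coll P Q R")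
      case True
      then have "cls P T Q = T" by (auto simp: cls_def)
      then have cT1: "card T \<le> Suc m" using cb Q by metis
      obtain \<alpha> \<beta> \<gamma> where l: "\<alpha> * fst Q + \<beta> * snd Q + \<gamma> = 0" "\<alpha> * fst P + \<beta> * snd P + \<gamma> \<noteq> 0"
        using line1[OF QP] by blast
      have c1: "card (T - {Q}) \<le> m" using cT1 Q fin by simp
      show ?thesis
      proof (rule step[of "T - {Q}" \<alpha> \<beta> \<gamma>])
        show "\<forall>X\<in>T - {Q}. card (cls P (T - {Q}) X) \<le> m"
        proof
          fix X assume "X \<in> T - {Q}"
          have "cls P (T - {Q}) X \<subseteq> T - {Q}" by (auto simp: cls_def)
          then have "card (cls P (T - {Q}) X) \<le> card (T - {Q})"
            using fin by (intro card_mono) auto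
          then show "card (cls P (T - {Q}) X) \<le> m" using c1 by linarith
        qed
      qed (use c1 l Q in auto)
    next
      case False
      then obtain R0 where R0: "R0 \<in> T" "\<not> coll P Q R0" by blast
      obtain R where R: "R \<in> T" "\<not> coll P Q R" "(\<exists>X\<in>T. \<not> coll P Q X \<and> full X) \<longrightarrow> full R"
        using R0 by blast
      have QR: "Q \<noteq> R" using R(2) coll_refl by metis
      obtain \<alpha> \<beta> \<gamma> where l: "\<alpha> * fst Q + \<beta> * snd Q + \<gamma> = 0" "\<alpha> * fst R + \<beta> * snd R + \<gamma> = 0"
          "\<alpha> * fst P + \<beta> * snd P + \<gamma> \<noteq> 0"
        using line2[OF R(2)] by blast
      have cTQR: "card (T - {Q, R}) = card T - 2" using fin Q R QR by (simp add: card_Diff_subset)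
      have disj: "cls P T X \<inter> cls P T Y = {}" if "\<not> coll P X Y" for X Y
      proof (rule ccontr)
        assume "cls P T X \<inter> cls P T Y \<noteq> {}"
        then obtain Z where Z: "Z \<in> T" "coll P X Z" "coll P Y Z" by (auto simp: cls_def)
        have "Z \<noteq> P" using Z PT by blast
        then have "coll P X Y" using coll_trans[of Z P X Y] coll_sym Z by blast
        then show False using that by blast
      qed
      show ?thesis
      proof (rule step[of "T - {Q, R}" \<alpha> \<beta> \<gamma>])
        show "card (T - {Q, R}) \<le> 2 * m" using cTQR cT by simp
        show "\<forall>X\<in>T - {Q, R}. card (cls P (T - {Q, R}) X) \<le> m"
        proof
          fix X assume X: "X \<in> T - {Q, R}"
          have eq: "cls P (T - {Q, R}) X = cls P T X - {Q, R}" by (auto simp: cls_def)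
          have le: "card (cls P T X) \<le> Suc m" using cb X by blast
          show "card (cls P (T - {Q, R}) X) \<le> m"
          proof (cases "full X")
            case False
            then have "card (cls P T X) \<le> m" using le full_def by simp
            moreover have "card (cls P T X - {Q, R}) \<le> card (cls P T X)"
              using clsfin by (intro card_mono) auto
            ultimately show ?thesis using eq by simp
          next
            case True
            then have fQ: "full Q" using Q X by blast
            have rem: "card (cls P T X - {Q, R}) \<le> m" if "Y \<in> cls P T X" "Y \<in> {Q, R}" for Y
            proof -
              have "card (cls P T X - {Q, R}) \<le> card (cls P T X - {Y})"
                using clsfin that by (intro card_mono) auto
              also have "\<dots> = m" using True that clsfin by (simp add: full_def)
              finally show ?thesis .
            qed
            show ?thesis
            proof (cases "coll P Q X")
              case True
              then have "Q \<in> cls P T X" using Q(1) coll_sym[OF True] by (simp add: cls_def)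
              then show ?thesis using rem[of Q] eq by simp
            next
              case nQX: False
              then have fR: "full R" using R X True by blast
              show ?thesis
              proof (cases "coll P R X")
                case True
                then have "R \<in> cls P T X" using R(1) coll_sym[OF True] by (simp add: cls_def)
                then show ?thesis using rem[of R] eq by simp
              next
                case nRX: False
                have d1: "cls P T Q \<inter> cls P T R = {}" using disj R(2) by blast
                have d2: "(cls P T Q \<union> cls P T R) \<inter> cls P T X = {}"
                  using disj nQX nRX by blast
                have "card (cls P T Q \<union> cls P T R \<union> cls P T X) = 3 * Suc m"
                  using d1 d2 clsfin fQ fR True
                  by (simp add: card_Un_disjoint full_def)
                moreover have "card (cls P T Q \<union> cls P T R \<union> cls P T X) \<le> card T"
                  using fin clsT by (intro card_mono) auto
                ultimately show ?thesis using cT by simp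
              qed
            qed
          qed
        qed
      qed (use l Q R in auto)
    qed
  qed
qed


lemma cls_collinear:
  fixes P Q :: "'a::field \<times> 'a"
  assumes "Q \<noteq> P"
  shows "collinear_pts (insert P (cls P T Q))"
proof -
  define a0 where "a0 = snd Q - snd P"
  define b0 where "b0 = - (fst Q - fst P)"
  define e0 where "e0 = - (a0 * fst P + b0 * snd P)"
  have nz: "(a0, b0) \<noteq> (0, 0)" using assms by (auto simp: a0_def b0_def prod_eq_iff)
  have "a0 * x + b0 * y + e0 = 0" if "(x, y) \<in> insert P (cls P T Q)" for x y
  proof (cases "(x, y) = P")
    case True
    then show ?thesis by (auto simp: e0_def)
  next
    case False
    then have "coll P Q (x, y)" using that by (auto simp: cls_def)
    then have h: "(fst Q - fst P) * (y - snd P) = (snd Q - snd P) * (x - fst P)"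
      by (simp add: coll_def)
    have "a0 * x + b0 * y + e0 = (snd Q - snd P) * (x - fst P) - (fst Q - fst P) * (y - snd P)"
      by (simp add: a0_def b0_def e0_def algebra_simps)
    then show ?thesis using h by simp
  qed
  then show ?thesis unfolding collinear_pts_def using nz by blast
qed

theorem proposition1:
  fixes q \<rho> d a :: nat and c :: "'a::{finite, field} \<times> 'a \<Rightarrow> 'a"
  assumes "\<exists>p k. prime p \<and> k > 0 \<and> q = p ^ k"
    and "card (UNIV :: 'a set) = q ^ 2"
    and "\<rho> \<le> q ^ 2 - q - 2"
    and "d = herm_min_dist q \<rho> TYPE('a)"
    and "herm_LG_code q \<rho> = (herm_poly_code q (d - 2) :: ('a \<times> 'a \<Rightarrow> 'a) set)"
    and "a + 3 \<le> d"
    and "c \<in> herm_dual_code q \<rho>"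
    and "herm_weight q c = d + a"
  shows "\<exists>S \<subseteq> {P \<in> herm_pts q. c P \<noteq> 0}. card S \<ge> d - 1 \<and> collinear_pts S"
proof (rule ccontr)
  assume H: "\<not> (\<exists>S \<subseteq> {P \<in> herm_pts q. c P \<noteq> 0}. card S \<ge> d - 1 \<and> collinear_pts S)"
  define m where "m = d - 2"
  define supp where "supp = {P \<in> herm_pts q. c P \<noteq> 0}"
  have dm: "d = m + 2" "1 \<le> m" "a + 1 \<le> m" using assms(6) m_def by auto
  have finsupp: "finite supp" by simp
  have csupp: "card supp = d + a" using assms(8) by (simp add: herm_weight_def supp_def)
  then have "supp \<noteq> {}" using dm by auto
  then obtain P where P: "P \<in> supp" by blast
  define T where "T = supp - {P}"
  have finT: "finite T" by simp
  have PT: "P \<notin> T" by (simp add: T_def)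
  have cT: "card T \<le> 2 * m" using csupp P dm by (simp add: T_def)
  have cb: "\<forall>Q\<in>T. card (cls P T Q) \<le> m"
  proof
    fix Q assume Q: "Q \<in> T"
    then have QP: "Q \<noteq> P" using PT by blast
    define S where "S = insert P (cls P T Q)"
    have Ssub: "S \<subseteq> supp" using P by (auto simp: S_def cls_def T_def)
    have "collinear_pts S" unfolding S_def by (rule cls_collinear[OF QP])
    then have "\<not> card S \<ge> d - 1" using H Ssub unfolding supp_def by blast
    then have "card S \<le> m" using dm by simp
    moreover have "card (cls P T Q) \<le> card S" unfolding S_def by (intro card_mono) auto
    ultimately show "card (cls P T Q) \<le> m" by simp
  qed
  obtain f where f: "pf m f" "\<forall>Q\<in>T. f Q = 0" "f P \<noteq> 0"
    using cover[OF finT PT cT cb] by blast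
  define v where "v X = (if X \<in> herm_pts q then f X else 0)" for X
  obtain cf where cf: "\<And>x y. f (x, y) = (\<Sum>i\<le>m. \<Sum>j\<le>m - i. cf i j * x ^ i * y ^ j)"
    using f(1) unfolding pf_def by blast
  have "v \<in> herm_poly_code q (d - 2)"
    unfolding herm_poly_code_def herm_word_def m_def[symmetric]
    by (auto simp: v_def cf)
  then have "v \<in> herm_LG_code q \<rho>" using assms(5) by simp
  then have zero: "(\<Sum>X \<in> herm_pts q. c X * v X) = 0"
    using assms(7) unfolding herm_dual_code_def by blast
  have Ph: "P \<in> herm_pts q" "c P \<noteq> 0" using P by (auto simp: supp_def)
  have "(\<Sum>X \<in> herm_pts q. c X * v X) = c P * v P + (\<Sum>X \<in> herm_pts q - {P}. c X * v X)"
    using Ph by (simp add: sum.remove)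
  also have "(\<Sum>X \<in> herm_pts q - {P}. c X * v X) = 0"
  proof (rule sum.neutral, rule ballI)
    fix X assume X: "X \<in> herm_pts q - {P}"
    show "c X * v X = 0"
    proof (cases "c X = 0")
      case False
      then have "X \<in> T" using X by (auto simp: T_def supp_def)
      then show ?thesis using f(2) by (simp add: v_def)
    qed simp
  qed
  finally have "c P * f P = 0" using zero Ph by (simp add: v_def)
  then show False using Ph f(3) by simp
qed

end
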